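(* Let $j\in\mathbb{N}$, $1\le r\le\infty$ and $s<j-\frac12$. Then for any $T>0$ the flow map $S:\hat H^s_r(\mathbb{T})\times(-T,T)\to\hat H^s_r(\mathbb{T})$ of the periodic Cauchy problem $$i\partial_tu+(-1)^{j+1}\partial_x^{2j}u=iu^2\,\partial_x^{2j-1}\overline u$$ cannot be uniformly continuous on bounded sets.
   Context: $\mathbb{T}=\mathbb{R}/2\pi\mathbb{Z}$; $\|u\|_{\hat H^s_r(\mathbb{T})}=\|\langle k\rangle^s\hat u(k)\|_{\ell^{r'}_k(\mathbb{Z})}$ with $r'$ the Hölder conjugate of $r$. *)

theory Defs
  imports "HOL-Analysis.Analysis"
begin

text \<open>Functions on the torus T = R/2piZ are represented as 2pi-periodic functions
  real => complex.  Fourier coefficients with the normalisation 1/(2pi).\<close>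

definition fourier_coeff :: "(real \<Rightarrow> complex) \<Rightarrow> int \<Rightarrow> complex" where
  "fourier_coeff f k =
     complex_of_real (1 / (2 * pi)) *
     integral {0..2*pi} (\<lambda>x. f x * exp (- \<i> * of_int k * of_real x))"

definition hat_weight :: "real \<Rightarrow> (real \<Rightarrow> complex) \<Rightarrow> int \<Rightarrow> real" where
  "hat_weight s f k = (1 + (real_of_int k)^2) powr (s / 2) * cmod (fourier_coeff f k)"

definition hoelder_conj :: "ereal \<Rightarrow> ereal" where
  "hoelder_conj r = (if r = \<infinity> then 1 else if r = 1 then \<infinity>
                     else ereal (real_of_ereal r / (real_of_ereal r - 1)))"

definition in_hat_H :: "real \<Rightarrow> ereal \<Rightarrow> (real \<Rightarrow> complex) \<Rightarrow> bool" where
  "in_hat_H s r f = (if hoelder_conj r = \<infinity> then bdd_above (range (hat_weight s f))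
                     else (\<lambda>k. hat_weight s f k powr real_of_ereal (hoelder_conj r)) summable_on UNIV)"

definition hat_H_norm :: "real \<Rightarrow> ereal \<Rightarrow> (real \<Rightarrow> complex) \<Rightarrow> real" where
  "hat_H_norm s r f = (if hoelder_conj r = \<infinity> then (SUP k. hat_weight s f k)
     else (\<Sum>\<^sub>\<infinity>k. hat_weight s f k powr real_of_ereal (hoelder_conj r))
            powr (1 / real_of_ereal (hoelder_conj r)))"

text \<open>D m t is the m-th x-derivative of u t,
  Ut the time derivative.  Note d_x^(2j-1) conj(u) = conj(d_x^(2j-1) u).\<close>
definition is_periodic_solution ::
  "nat \<Rightarrow> real \<Rightarrow> ereal \<Rightarrow> real \<Rightarrow> (real \<Rightarrow> real \<Rightarrow> complex) \<Rightarrow> bool" where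
  "is_periodic_solution j s r T u \<longleftrightarrow>
     (\<forall>t x. u t (x + 2 * pi) = u t x) \<and>
     (\<forall>t\<in>{-T<..<T}. in_hat_H s r (u t)) \<and>
     (\<exists>D Ut. D 0 = u \<and>
        (\<forall>m. \<forall>t\<in>{-T<..<T}. \<forall>x.
            ((\<lambda>y. D m t y) has_vector_derivative D (Suc m) t x) (at x)) \<and>
        (\<forall>t\<in>{-T<..<T}. \<forall>x. ((\<lambda>\<tau>. u \<tau> x) has_vector_derivative Ut t x) (at t)) \<and>
        (\<forall>t\<in>{-T<..<T}. \<forall>x.
            \<i> * Ut t x + (-1) ^ (j + 1) * D (2 * j) t x
              = \<i> * (u t x)\<^sup>2 * cnj (D (2 * j - 1) t x)))"

end

theory Submission
  imports Defs
begin

lemma int_exp: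
  "((\<lambda>x. exp (\<i> * complex_of_real (real_of_int m * x))) has_integral
     (if m = 0 then complex_of_real (2*pi) else 0)) {0..2*pi}"
proof (cases "m = 0")
  case True
  then show ?thesis using has_integral_const_real[of "1::complex" 0 "2*pi"]
    by (simp add: scaleR_conv_of_real)
next
  case False
  define G where "G z = exp (\<i> * of_int m * z) / (\<i> * of_int m)" for z :: complex
  have d: "((\<lambda>x. G (of_real x)) has_vector_derivative exp (\<i> * complex_of_real (real_of_int m * x)))
            (at x within {0..2*pi})" for x
  proof -
    have "(G has_field_derivative exp (\<i> * of_int m * of_real x)) (at (of_real x))"
      unfolding G_def using False
      by (auto intro!: derivative_eq_intros simp: field_simps)
    from has_vector_derivative_real_field[OF this] show ?thesis by (simp add: mult.assoc)
  qed
  have "((\<lambda>x. exp (\<i> * complex_of_real (real_of_int m * x))) has_integral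
     (G (of_real (2*pi)) - G (of_real 0))) {0..2*pi}"
    by (rule fundamental_theorem_of_calculus) (use d in auto)
  moreover have "G (of_real (2*pi)) - G (of_real 0) = 0"
  proof -
    have "exp (\<i> * of_int m * complex_of_real (2*pi)) = 1"
      using exp_2pi_1_int[of m] by (simp add: mult_ac)
    then show ?thesis unfolding G_def by simp
  qed
  ultimately show ?thesis using False by simp
qed

lemma fc_exp:
  "fourier_coeff (\<lambda>x. a * exp (\<i> * complex_of_real (real_of_int N * x))) k = (if k = N then a else 0)"
proof -
  have eq: "(\<lambda>x. a * exp (\<i> * complex_of_real (real_of_int N * x)) * exp (- \<i> * of_int k * of_real x))
     = (\<lambda>x. a * exp (\<i> * complex_of_real (real_of_int (N - k) * x)))"
    by (rule ext) (simp add: mult.assoc exp_add[symmetric] algebra_simps)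
  have "integral {0..2*pi} (\<lambda>x. a * exp (\<i> * complex_of_real (real_of_int (N - k) * x)))
      = a * (if N - k = 0 then complex_of_real (2*pi) else 0)"
    using has_integral_mult_right[OF int_exp[of "N-k"], of a] by (rule integral_unique)
  then show ?thesis unfolding fourier_coeff_def eq by (auto simp: scaleR_conv_of_real)
qed

lemma hoelder_pos:
  assumes "1 \<le> r" "hoelder_conj r \<noteq> \<infinity>"
  shows "real_of_ereal (hoelder_conj r) > 0"
proof -
  have "r \<noteq> 1" using assms(2) unfolding hoelder_conj_def by auto
  show ?thesis
  proof (cases r)
    case (real x)
    with assms \<open>r \<noteq> 1\<close> have "x > 1" by auto
    then show ?thesis using real unfolding hoelder_conj_def by auto
  next
    case PInf then show ?thesis unfolding hoelder_conj_def by auto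
  next
    case MInf then show ?thesis using assms by auto
  qed
qed

lemma hw_exp:
  "hat_weight s (\<lambda>x. a * exp (\<i> * complex_of_real (real_of_int N * x))) k
    = (if k = N then (1 + (real_of_int N)^2) powr (s / 2) * cmod a else 0)"
  unfolding hat_weight_def fc_exp by auto

lemma norm_exp:
  assumes "1 \<le> r"
  shows "in_hat_H s r (\<lambda>x. a * exp (\<i> * complex_of_real (real_of_int N * x))) \<and>
         hat_H_norm s r (\<lambda>x. a * exp (\<i> * complex_of_real (real_of_int N * x)))
           = (1 + (real_of_int N)^2) powr (s / 2) * cmod a"
proof -
  define w where "w = (1 + (real_of_int N)^2) powr (s / 2) * cmod a"
  have w0: "w \<ge> 0" unfolding w_def by simp
  have hw: "hat_weight s (\<lambda>x. a * exp (\<i> * complex_of_real (real_of_int N * x))) = (\<lambda>k. if k = N then w else 0)"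
    by (rule ext) (simp only: hw_exp w_def)
  show ?thesis
  proof (cases "hoelder_conj r = \<infinity>")
    case True
    have rng: "range (\<lambda>k::int. if k = N then w else 0) \<subseteq> {0, w}" by auto
    have bdd: "bdd_above (range (\<lambda>k::int. if k = N then w else 0))"
      by (rule bdd_above_mono[OF _ rng]) auto
    have "(SUP k. (\<lambda>k::int. if k = N then w else 0) k) = w"
      by (rule cSup_eq_maximum) (use w0 in auto)
    then show ?thesis using True bdd unfolding in_hat_H_def hat_H_norm_def hw w_def by simp
  next
    case False
    define p where "p = real_of_ereal (hoelder_conj r)"
    have p: "p > 0" using hoelder_pos[OF assms False] p_def by simp
    have e: "(\<lambda>k. (if k = N then w else 0) powr p) = (\<lambda>k::int. if k = N then w powr p else 0)"
      by auto
    have hs: "((\<lambda>k::int. if k = N then w powr p else 0) has_sum (w powr p)) UNIV"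
    proof -
      have "((\<lambda>k::int. if k = N then w powr p else 0) has_sum (sum (\<lambda>k::int. if k = N then w powr p else 0) {N})) {N}"
        by (rule has_sum_finite) simp
      then have "((\<lambda>k::int. if k = N then w powr p else 0) has_sum (w powr p)) {N}" by simp
      then show ?thesis by (rule has_sum_cong_neutral[THEN iffD1, rotated -1]) auto
    qed
    have "(w powr p) powr (1 / p) = w"
      using p w0 by (cases "w = 0") (auto simp: powr_powr)
    then show ?thesis using False hs unfolding in_hat_H_def hat_H_norm_def hw e p_def[symmetric]
      by (auto simp: summable_on_def infsumI w_def)
  qed
qed

definition pw :: "complex \<Rightarrow> real \<Rightarrow> int \<Rightarrow> real \<Rightarrow> real \<Rightarrow> complex" where
  "pw c w N t x = c * exp (\<i> * complex_of_real (real_of_int N * x + w * t))"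

lemma pw_split:
  "pw c w N t = (\<lambda>x. (c * exp (\<i> * complex_of_real (w * t))) * exp (\<i> * complex_of_real (real_of_int N * x)))"
  by (rule ext) (simp add: pw_def exp_add[symmetric] algebra_simps)

lemma pw_diff:
  "(\<lambda>x. pw c w N t x - pw c' w' N t x) = (\<lambda>x. (c * exp (\<i> * complex_of_real (w * t)) - c' * exp (\<i> * complex_of_real (w' * t))) * exp (\<i> * complex_of_real (real_of_int N * x)))"
  by (rule ext) (simp add: pw_split algebra_simps)

lemma pw_per: "pw c w N t (x + 2 * pi) = pw c w N t x"
proof -
  have "\<i> * complex_of_real (real_of_int N * (x + 2 * pi) + w * t)
     = \<i> * complex_of_real (real_of_int N * x + w * t) + \<i> * (of_int N * (of_real pi * 2))"
    by (simp add: algebra_simps)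
  then show ?thesis unfolding pw_def by (simp only: exp_plus_2pin)
qed

lemma pw_cnj: "pw c w N t x * cnj (pw c w N t x) = complex_of_real ((cmod c)^2)"
proof -
  have "cmod (pw c w N t x) = cmod c" unfolding pw_def
    by (simp add: norm_mult norm_exp_i_times)
  then show ?thesis by (metis complex_norm_square)
qed

lemma pw_dx:
  "((\<lambda>y. (\<i> * of_int N)^m * pw c w N t y) has_vector_derivative ((\<i> * of_int N)^(Suc m) * pw c w N t x)) (at x)"
proof -
  define g where "g z = (\<i> * of_int N)^m * c * exp (\<i> * (of_int N * z + of_real (w * t)))" for z :: complex
  have "(g has_field_derivative ((\<i> * of_int N)^(Suc m) * pw c w N t x)) (at (of_real x))"
    unfolding g_def pw_def by (auto intro!: derivative_eq_intros simp: algebra_simps)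
  from has_vector_derivative_real_field[OF this]
  show ?thesis unfolding g_def pw_def by (simp add: algebra_simps)
qed

lemma pw_dt:
  "((\<lambda>\<tau>. pw c w N \<tau> x) has_vector_derivative (\<i> * of_real w * pw c w N t x)) (at t)"
proof -
  define g where "g z = c * exp (\<i> * (of_real (real_of_int N * x) + of_real w * z))" for z :: complex
  have "(g has_field_derivative (\<i> * of_real w * pw c w N t x)) (at (of_real t))"
    unfolding g_def pw_def by (auto intro!: derivative_eq_intros simp: algebra_simps)
  from has_vector_derivative_real_field[OF this]
  show ?thesis unfolding g_def pw_def by (simp add: algebra_simps)
qed

lemma pw_ode:
  assumes "w = - ((-1)^k * (cmod c)^2 * (real_of_int N)^(2*k+1)) - (real_of_int N)^(2*k+2)"
  shows "\<i> * (\<i> * of_real w * pw c w N t x) + (-1) ^ (Suc k + 1) * ((\<i> * of_int N)^(2 * Suc k) * pw c w N t x)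
       = \<i> * (pw c w N t x)\<^sup>2 * cnj ((\<i> * of_int N)^(2 * Suc k - 1) * pw c w N t x)"
proof -
  define P where "P = pw c w N t x"
  have i2: "\<i>^(2*k) = (-1)^k" by (simp add: power_mult)
  have a: "(\<i> * of_int N)^(2 * Suc k) = (-1)^(Suc k) * of_int N^(2*k+2)"
  proof -
    have "(\<i> * of_int N)^(2 * Suc k) = ((\<i> * of_int N)^2)^(Suc k)" by (simp only: power_mult)
    also have "(\<i> * of_int N)^2 = - ((of_int N :: complex)^2)" by (simp add: power_mult_distrib)
    also have "(- ((of_int N :: complex)^2))^(Suc k) = (-1)^(Suc k) * ((of_int N)^2)^(Suc k)"
      by (rule power_minus)
    also have "((of_int N :: complex)^2)^(Suc k) = of_int N^(2*k+2)"
      by (metis power_mult mult_2 add_2_eq_Suc' mult_Suc_right Suc_eq_plus1 add.commute)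
    finally show ?thesis .
  qed
  have b: "cnj ((\<i> * of_int N)^(2 * Suc k - 1)) = - \<i> * (-1)^k * of_int N^(2*k+1)"
    using i2 by (simp add: power_mult_distrib)
  have "\<i> * P\<^sup>2 * cnj ((\<i> * of_int N)^(2 * Suc k - 1) * P)
      = \<i> * P * cnj ((\<i> * of_int N)^(2 * Suc k - 1)) * (P * cnj P)"
    by (simp add: power2_eq_square)
  also have "\<dots> = \<i> * P * (- \<i> * (-1)^k * of_int N^(2*k+1)) * complex_of_real ((cmod c)^2)"
    unfolding b P_def pw_cnj ..
  also have "\<dots> = (-1)^k * of_int N^(2*k+1) * complex_of_real ((cmod c)^2) * P"
    by (simp add: algebra_simps)
  finally have r: "\<i> * P\<^sup>2 * cnj ((\<i> * of_int N)^(2 * Suc k - 1) * P) = (-1)^k * of_int N^(2*k+1) * complex_of_real ((cmod c)^2) * P" .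
  have l: "\<i> * (\<i> * of_real w * P) + (-1) ^ (Suc k + 1) * ((\<i> * of_int N)^(2 * Suc k) * P)
     = (- of_real w - of_int N^(2*k+2)) * P"
    unfolding a by (simp add: algebra_simps)
  have "- complex_of_real w - of_int N^(2*k+2) = (-1)^k * of_int N^(2*k+1) * complex_of_real ((cmod c)^2)"
    unfolding assms by simp
  then show ?thesis using l r unfolding P_def by simp
qed

lemma pw_sol:
  assumes "1 \<le> r" "w = - ((-1)^k * (cmod c)^2 * (real_of_int N)^(2*k+1)) - (real_of_int N)^(2*k+2)"
  shows "is_periodic_solution (Suc k) s r T (pw c w N)"
  unfolding is_periodic_solution_def
proof (intro conjI ballI allI)
  show "pw c w N t (x + 2 * pi) = pw c w N t x" for t x by (rule pw_per)
  show "in_hat_H s r (pw c w N t)" for t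
    unfolding pw_split using norm_exp[OF assms(1)] by blast
  show "\<exists>D Ut. D 0 = pw c w N \<and>
        (\<forall>m. \<forall>t\<in>{-T<..<T}. \<forall>x. ((\<lambda>y. D m t y) has_vector_derivative D (Suc m) t x) (at x)) \<and>
        (\<forall>t\<in>{-T<..<T}. \<forall>x. ((\<lambda>\<tau>. pw c w N \<tau> x) has_vector_derivative Ut t x) (at t)) \<and>
        (\<forall>t\<in>{-T<..<T}. \<forall>x. \<i> * Ut t x + (-1) ^ (Suc k + 1) * D (2 * Suc k) t x
              = \<i> * (pw c w N t x)\<^sup>2 * cnj (D (2 * Suc k - 1) t x))"
    apply (rule exI[of _ "\<lambda>m t y. (\<i> * of_int N)^m * pw c w N t y"])
    apply (rule exI[of _ "\<lambda>t x. \<i> * of_real w * pw c w N t x"])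
    using pw_dx pw_dt pw_ode[OF assms(2)] by auto
qed

lemma grow:
  fixes s M :: real
  assumes "s < real k + 1/2"
  shows "\<exists>N::nat. N \<ge> 1 \<and> M < real N^(2*k+1) / (1 + (real N)^2) powr s"
proof (cases "s < 0")
  case True
  define N where "N = nat (ceiling M) + 1"
  have N1: "N \<ge> 1" and NM: "M < real N" unfolding N_def by linarith+
  have p: "1 + (real N)^2 > 0" by (smt (verit) zero_le_power2)
  have d: "0 < (1 + (real N)^2) powr s" using p by simp
  have d1: "(1 + (real N)^2) powr s \<le> 1" using True
    using powr_mono[of s 0 "1+(real N)^2"] p by simp
  have "real N \<le> real N ^ (2*k+1)" using N1
    by (intro self_le_power) auto
  also have "\<dots> \<le> real N^(2*k+1) / (1 + (real N)^2) powr s"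
    using d mult_left_mono[OF d1, of "real N^(2*k+1)"] by (simp only: le_divide_eq) simp
  finally show ?thesis using N1 NM by (intro exI[of _ N]) auto
next
  case False
  define aa where "aa = 2*real k + 1 - 2* s"
  have a: "aa > 0" using assms aa_def by simp
  define X where "X = (\<bar>M\<bar> * 2 powr s + 1) powr (1/aa)"
  define N where "N = nat (ceiling X) + 1"
  have Y: "\<bar>M\<bar> * 2 powr s + 1 > 0"
    by (smt (verit) abs_ge_zero powr_ge_zero mult_nonneg_nonneg)
  have X0: "X > 0" unfolding X_def using Y by simp
  have N1: "N \<ge> 1" and NX: "X < real N" unfolding N_def by linarith+
  have "\<bar>M\<bar> * 2 powr s + 1 = X powr aa" unfolding X_def using a Y
    by (simp add: powr_powr)
  also have "\<dots> < real N powr aa" using NX X0 a by (simp add: powr_less_mono2)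
  finally have big: "\<bar>M\<bar> * 2 powr s < real N powr aa" by simp
  have Npos: "real N > 0" using N1 by simp
  have "(1 + (real N)^2) powr s \<le> (2 * (real N)^2) powr s"
  proof (rule powr_mono2)
    have "(real N)^2 \<ge> 1" using N1 by simp
    then show "1 + (real N)^2 \<le> 2 * (real N)^2" by linarith
  qed (use False in auto)
  also have "\<dots> = 2 powr s * real N powr (2* s)"
  proof -
    have sq: "(real N)^2 = real N powr 2" using Npos powr_realpow[of "real N" 2] by simp
    have "(2 * (real N)^2) powr s = 2 powr s * ((real N)^2) powr s"
      by (rule powr_mult)
    also have "((real N)^2) powr s = real N powr (2 * s)" unfolding sq by (rule powr_powr)
    finally show ?thesis .
  qed
  finally have den: "(1 + (real N)^2) powr s \<le> 2 powr s * real N powr (2* s)" .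
  have num: "real N^(2*k+1) = real N powr aa * real N powr (2* s)"
  proof -
    have "real N^(2*k+1) = real N powr (real (2*k+1))" using Npos by (rule powr_realpow[symmetric])
    also have "real (2*k+1) = aa + 2 * s" unfolding aa_def by simp
    also have "real N powr (aa + 2 * s) = real N powr aa * real N powr (2* s)" by (rule powr_add)
    finally show ?thesis .
  qed
  have "M * 2 powr s \<le> \<bar>M\<bar> * 2 powr s" by (intro mult_right_mono) auto
  then have "M * 2 powr s < real N powr aa" using big by linarith
  then have "M < real N powr aa / 2 powr s" by (simp add: field_simps)
  also have "\<dots> = real N^(2*k+1) / (2 powr s * real N powr (2* s))"
    unfolding num using Npos by simp
  also have "\<dots> \<le> real N^(2*k+1) / (1 + (real N)^2) powr s"
  proof (rule divide_left_mono[OF den])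
    have "1 + (real N)^2 > 0" by (smt (verit) zero_le_power2)
    then show "0 < 2 powr s * real N powr (2 * s) * (1 + (real N)^2) powr s" using Npos by simp
  qed simp
  finally show ?thesis using N1 by auto
qed
lemma W2_aux: fixes s :: real and N :: nat shows "((1 + (real N)^2) powr (s / 2))^2 = (1 + (real N)^2) powr s"
proof -
  have p: "1 + (real N)^2 > 0" by (smt (verit) zero_le_power2)
  have "((1 + (real N)^2) powr (s / 2))^2 = ((1 + (real N)^2) powr (s / 2)) powr 2"
    using p by (simp add: powr_realpow)
  also have "\<dots> = (1 + (real N)^2) powr s" by (simp add: powr_powr)
  finally show ?thesis .
qed
lemma dw_aux: fixes W \<eta> D P x :: real and k :: nat
  assumes W0: "W > 0" and W2: "W^2 = D"
  shows "(- ((-1)^k * (1/W)^2 * P) - x) - (- ((-1)^k * ((1+\<eta>)/W)^2 * P) - x)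
     = (-1)^k * (P * (2*\<eta> + \<eta>^2) / D)"
proof -
  have "(- ((-1)^k * (1/W)^2 * P) - x) - (- ((-1)^k * ((1+\<eta>)/W)^2 * P) - x)
     = (-1)^k * P * (((1+\<eta>)^2 - 1) / W^2)"
    by (simp add: power_divide algebra_simps diff_divide_distrib)
  also have "((1+\<eta>)^2 - 1) = 2*\<eta> + \<eta>^2" by (simp add: power2_eq_square algebra_simps)
  finally show ?thesis using W2 by simp
qed
lemma t0_aux: fixes T \<Omega> :: real assumes "pi / T < \<Omega>" "\<Omega> > 0" "T > 0"
  shows "pi / \<Omega> \<in> {-T<..<T}"
proof -
  have "pi < \<Omega> * T" using assms by (simp add: divide_less_eq mult.commute)
  then have "pi / \<Omega> < T" using assms by (simp add: divide_less_eq mult.commute)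
  moreover have "pi / \<Omega> > 0" using assms by simp
  ultimately show ?thesis using assms(3) by (simp add: greaterThanLessThan_iff)
qed

theorem proposition6p2:
  fixes j :: nat and r :: ereal and s :: real
  assumes "1 \<le> j" and "1 \<le> r" and "s < real j - 1 / 2"
  shows "\<forall>T>0. \<exists>R>0. \<exists>\<epsilon>>0. \<forall>\<delta>>0. \<exists>u v.
           is_periodic_solution j s r T u \<and> is_periodic_solution j s r T v \<and>
           hat_H_norm s r (u 0) \<le> R \<and> hat_H_norm s r (v 0) \<le> R \<and>
           hat_H_norm s r (\<lambda>x. u 0 x - v 0 x) < \<delta> \<and>
           (\<exists>t\<in>{-T<..<T}. \<epsilon> \<le> hat_H_norm s r (\<lambda>x. u t x - v t x))"
proof (intro allI impI)
  fix T :: real assume T: "T > 0"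
  obtain k where jk: "j = Suc k" using assms(1) by (cases j) auto
  have sk: "s < real k + 1/2" using assms(3) jk by simp
  show "\<exists>R>0. \<exists>\<epsilon>>0. \<forall>\<delta>>0. \<exists>u v.
           is_periodic_solution j s r T u \<and> is_periodic_solution j s r T v \<and>
           hat_H_norm s r (u 0) \<le> R \<and> hat_H_norm s r (v 0) \<le> R \<and>
           hat_H_norm s r (\<lambda>x. u 0 x - v 0 x) < \<delta> \<and>
           (\<exists>t\<in>{-T<..<T}. \<epsilon> \<le> hat_H_norm s r (\<lambda>x. u t x - v t x))"
  proof (rule exI[of _ "2::real"], rule conjI, simp, rule exI[of _ "1::real"], rule conjI, simp, intro allI impI)
    fix \<delta> :: real assume \<delta>: "\<delta> > 0"
    define \<eta> where "\<eta> = min (\<delta>/2) (1/2)"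
    have \<eta>0: "\<eta> > 0" and \<eta>1: "\<eta> \<le> 1/2" and \<eta>\<delta>: "\<eta> < \<delta>" using \<delta> unfolding \<eta>_def by auto
    obtain N :: nat where N1: "N \<ge> 1" and NM: "pi / (T * \<eta>) < real N^(2*k+1) / (1 + (real N)^2) powr s"
      using grow[OF sk] by blast
    define Nz where "Nz = int N"
    have NzN: "real_of_int Nz = real N" unfolding Nz_def by simp
    define W where "W = (1 + (real N)^2) powr (s / 2)"
    have W0: "W > 0" unfolding W_def by (smt (verit) zero_le_power2 powr_gt_zero)
    have W2: "W^2 = (1 + (real N)^2) powr s"
      unfolding W_def by (rule W2_aux)
    define cu where "cu = complex_of_real (1 / W)"
    define cv where "cv = complex_of_real ((1 + \<eta>) / W)"
    have mcu: "cmod cu = 1 / W" unfolding cu_def norm_of_real using W0 by simp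
    have mcv: "cmod cv = (1 + \<eta>) / W" unfolding cv_def norm_of_real using W0 \<eta>0 by simp
    define wu where "wu = - ((-1)^k * (cmod cu)^2 * (real_of_int Nz)^(2*k+1)) - (real_of_int Nz)^(2*k+2)"
    define wv where "wv = - ((-1)^k * (cmod cv)^2 * (real_of_int Nz)^(2*k+1)) - (real_of_int Nz)^(2*k+2)"
    define \<Omega> where "\<Omega> = real N^(2*k+1) * (2*\<eta> + \<eta>^2) / (1 + (real N)^2) powr s"
    have dw: "wu - wv = (-1)^k * \<Omega>"
      unfolding wu_def wv_def \<Omega>_def mcu mcv NzN by (rule dw_aux[OF W0 W2])
    have \<Omega>big: "pi / T < \<Omega>"
    proof -
      have d: "(1 + (real N)^2) powr s > 0" by (smt (verit) zero_le_power2 powr_gt_zero)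
      have "pi / T = \<eta> * (pi / (T * \<eta>))" using \<eta>0 T by simp
      also have "\<dots> < \<eta> * (real N^(2*k+1) / (1 + (real N)^2) powr s)"
        using mult_strict_left_mono[OF NM \<eta>0] by (simp only:)
      also have "\<dots> \<le> (2*\<eta> + \<eta>^2) * (real N^(2*k+1) / (1 + (real N)^2) powr s)"
        using \<eta>0 d by (intro mult_right_mono) auto
      also have "\<dots> = \<Omega>" unfolding \<Omega>_def by simp
      finally show ?thesis .
    qed
    have \<Omega>0: "\<Omega> > 0" using \<Omega>big T by (smt (verit) divide_pos_pos pi_gt_zero)
    define t0 where "t0 = pi / \<Omega>"
    have t0: "t0 \<in> {-T<..<T}" unfolding t0_def using \<Omega>big \<Omega>0 T by (rule t0_aux)
    define u where "u = pw cu wu Nz"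
    define v where "v = pw cv wv Nz"
    have su: "is_periodic_solution j s r T u" unfolding u_def jk
      by (rule pw_sol[OF assms(2)]) (simp add: wu_def)
    have sv: "is_periodic_solution j s r T v" unfolding v_def jk
      by (rule pw_sol[OF assms(2)]) (simp add: wv_def)
    have WN: "(1 + (real_of_int Nz)^2) powr (s / 2) = W" unfolding W_def NzN ..
    have nu: "hat_H_norm s r (u 0) = 1"
      unfolding u_def pw_split using norm_exp[OF assms(2)] WN mcu W0 by simp
    have nv: "hat_H_norm s r (v 0) = 1 + \<eta>"
      unfolding v_def pw_split using norm_exp[OF assms(2)] WN mcv W0 by simp
    have n0: "hat_H_norm s r (\<lambda>x. u 0 x - v 0 x) = \<eta>"
    proof -
      have "cu - cv = complex_of_real (1/W - (1+\<eta>)/W)" unfolding cu_def cv_def by (simp only: of_real_diff)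
      moreover have "\<bar>1/W - (1+\<eta>)/W\<bar> = \<eta> / W" using W0 \<eta>0 by (simp add: field_simps)
      ultimately have "cmod (cu - cv) = \<eta> / W" by (simp only: norm_of_real)
      then show ?thesis
        unfolding u_def v_def pw_diff using norm_exp[OF assms(2)] WN W0 by simp
    qed
    have nt: "hat_H_norm s r (\<lambda>x. u t0 x - v t0 x) = 2 + \<eta>"
    proof -
      have sg: "(-1::real)^k = 1 \<or> (-1::real)^k = -1" by (cases "even k") auto
      have e1: "exp (\<i> * complex_of_real ((wu - wv) * t0)) = -1"
      proof -
        have "(wu - wv) * t0 = (-1)^k * pi" unfolding dw t0_def using \<Omega>0 by simp
        moreover have "exp (\<i> * complex_of_real ((wu - wv) * t0)) = cis ((wu - wv) * t0)"
          by (rule cis_conv_exp[symmetric])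
        moreover have "cis ((-1)^k * pi) = -1" using sg by (auto simp: cis.ctr complex_eq_iff)
        ultimately show ?thesis by simp
      qed
      have "exp (\<i> * complex_of_real (wu * t0)) = exp (\<i> * complex_of_real (wv * t0)) * exp (\<i> * complex_of_real ((wu - wv) * t0))"
        by (simp add: exp_add[symmetric] algebra_simps)
      then have "cu * exp (\<i> * complex_of_real (wu * t0)) - cv * exp (\<i> * complex_of_real (wv * t0))
         = - exp (\<i> * complex_of_real (wv * t0)) * (cu + cv)" using e1 by (simp add: algebra_simps)
      note eqn = this
      have "cmod (cu * exp (\<i> * complex_of_real (wu * t0)) - cv * exp (\<i> * complex_of_real (wv * t0)))
         = (2 + \<eta>) / W"
      proof -
        have "cu + cv = complex_of_real ((2 + \<eta>) / W)" unfolding cu_def cv_def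
          by (simp only: of_real_add[symmetric]) (simp add: add_divide_distrib)
        moreover have "\<bar>(2 + \<eta>) / W\<bar> = (2 + \<eta>) / W" using W0 \<eta>0 by simp
        ultimately show ?thesis unfolding eqn norm_minus_commute
          by (simp only: norm_mult norm_minus_cancel norm_exp_i_times norm_of_real)
      qed
      then show ?thesis
        unfolding u_def v_def pw_diff using norm_exp[OF assms(2)] WN W0 by simp
    qed
    have A: "hat_H_norm s r (u 0) \<le> 2" using nu by simp
    have B: "hat_H_norm s r (v 0) \<le> 2" using nv \<eta>1 by simp
    have C: "hat_H_norm s r (\<lambda>x. u 0 x - v 0 x) < \<delta>" using n0 \<eta>\<delta> by simp
    have D: "\<exists>t\<in>{-T<..<T}. 1 \<le> hat_H_norm s r (\<lambda>x. u t x - v t x)"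
      by (rule bexI[of _ t0]) (use nt \<eta>0 t0 in simp_all)
    show "\<exists>u v. is_periodic_solution j s r T u \<and> is_periodic_solution j s r T v \<and>
           hat_H_norm s r (u 0) \<le> 2 \<and> hat_H_norm s r (v 0) \<le> 2 \<and>
           hat_H_norm s r (\<lambda>x. u 0 x - v 0 x) < \<delta> \<and>
           (\<exists>t\<in>{-T<..<T}. 1 \<le> hat_H_norm s r (\<lambda>x. u t x - v t x))"
      using su sv A B C D by blast
  qed
qed

end
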